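(* Let $L$ be a finite-dimensional pure, nonnilpotent, solvable Lie algebra over $\mathbb{C}$ of breadth $2$ such that $\dim[L,L]=2$ and $\dim L^k=1$ for all integers $k\geq 2$. Then $\dim Z(L)=1$.
   Context: For $x\in L$, $b(x)=\mathrm{rank}(\mathrm{ad}_x)$ and the breadth of $L$ is $b(L)=\max\{b(x)\mid x\in L\}$. $L$ is pure if it has no abelian ideal as a direct summand; equivalently $Z(L)\subseteq[L,L]$, where $Z(L)$ is the center. The lower central series is indexed by $L^0=L$, $L^1=[L,L]$ and $L^k=[L,L^{k-1}]$ for $k\geq 2$. *)

theory Defs
  imports Complex_Main
begin

definition lie_algebra :: "(complex \<Rightarrow> 'v::ab_group_add \<Rightarrow> 'v) \<Rightarrow> ('v \<Rightarrow> 'v \<Rightarrow> 'v) \<Rightarrow> bool" where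
  "lie_algebra scale br \<longleftrightarrow>
     vector_space scale \<and>
     (\<forall>x y z. br (x + y) z = br x z + br y z) \<and>
     (\<forall>x y z. br x (y + z) = br x y + br x z) \<and>
     (\<forall>c x y. br (scale c x) y = scale c (br x y)) \<and>
     (\<forall>c x y. br x (scale c y) = scale c (br x y)) \<and>
     (\<forall>x. br x x = 0) \<and>
     (\<forall>x y z. br x (br y z) + br y (br z x) + br z (br x y) = 0)"

definition fin_dim :: "(complex \<Rightarrow> 'v::ab_group_add \<Rightarrow> 'v) \<Rightarrow> bool" where
  "fin_dim scale \<longleftrightarrow> (\<exists>B. finite B \<and> module.span scale B = UNIV)"

definition brk_set :: "(complex \<Rightarrow> 'v::ab_group_add \<Rightarrow> 'v) \<Rightarrow> ('v \<Rightarrow> 'v \<Rightarrow> 'v) \<Rightarrow> 'v set \<Rightarrow> 'v set \<Rightarrow> 'v set" where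
  "brk_set scale br A B = module.span scale {br a b | a b. a \<in> A \<and> b \<in> B}"

fun lcs :: "(complex \<Rightarrow> 'v::ab_group_add \<Rightarrow> 'v) \<Rightarrow> ('v \<Rightarrow> 'v \<Rightarrow> 'v) \<Rightarrow> nat \<Rightarrow> 'v set" where
  "lcs scale br 0 = UNIV"
| "lcs scale br (Suc k) = brk_set scale br UNIV (lcs scale br k)"

fun derived :: "(complex \<Rightarrow> 'v::ab_group_add \<Rightarrow> 'v) \<Rightarrow> ('v \<Rightarrow> 'v \<Rightarrow> 'v) \<Rightarrow> nat \<Rightarrow> 'v set" where
  "derived scale br 0 = UNIV"
| "derived scale br (Suc k) = brk_set scale br (derived scale br k) (derived scale br k)"

definition nilpotent_lie :: "(complex \<Rightarrow> 'v::ab_group_add \<Rightarrow> 'v) \<Rightarrow> ('v \<Rightarrow> 'v \<Rightarrow> 'v) \<Rightarrow> bool" where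
  "nilpotent_lie scale br \<longleftrightarrow> (\<exists>k. lcs scale br k = {0})"

definition solvable_lie :: "(complex \<Rightarrow> 'v::ab_group_add \<Rightarrow> 'v) \<Rightarrow> ('v \<Rightarrow> 'v \<Rightarrow> 'v) \<Rightarrow> bool" where
  "solvable_lie scale br \<longleftrightarrow> (\<exists>k. derived scale br k = {0})"

definition center :: "('v::ab_group_add \<Rightarrow> 'v \<Rightarrow> 'v) \<Rightarrow> 'v set" where
  "center br = {z. \<forall>x. br z x = 0}"

definition lie_ideal :: "(complex \<Rightarrow> 'v::ab_group_add \<Rightarrow> 'v) \<Rightarrow> ('v \<Rightarrow> 'v \<Rightarrow> 'v) \<Rightarrow> 'v set \<Rightarrow> bool" where
  "lie_ideal scale br I \<longleftrightarrow> module.subspace scale I \<and> (\<forall>x y. y \<in> I \<longrightarrow> br x y \<in> I)"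

definition pure_lie :: "(complex \<Rightarrow> 'v::ab_group_add \<Rightarrow> 'v) \<Rightarrow> ('v \<Rightarrow> 'v \<Rightarrow> 'v) \<Rightarrow> bool" where
  "pure_lie scale br \<longleftrightarrow>
     \<not> (\<exists>A B. lie_ideal scale br A \<and> lie_ideal scale br B \<and> A \<noteq> {0} \<and>
              (\<forall>a\<in>A. \<forall>a'\<in>A. br a a' = 0) \<and>
              A \<inter> B = {0} \<and> {a + b | a b. a \<in> A \<and> b \<in> B} = UNIV)"

definition breadth_elt :: "(complex \<Rightarrow> 'v::ab_group_add \<Rightarrow> 'v) \<Rightarrow> ('v \<Rightarrow> 'v \<Rightarrow> 'v) \<Rightarrow> 'v \<Rightarrow> nat" where
  "breadth_elt scale br x = vector_space.dim scale (range (br x))"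

definition breadth :: "(complex \<Rightarrow> 'v::ab_group_add \<Rightarrow> 'v) \<Rightarrow> ('v \<Rightarrow> 'v \<Rightarrow> 'v) \<Rightarrow> nat" where
  "breadth scale br = Max (range (breadth_elt scale br))"

end

theory Submission
  imports Defs
begin

locale lie_alg =
  fixes scale :: "complex \<Rightarrow> 'v::ab_group_add \<Rightarrow> 'v" and br :: "'v \<Rightarrow> 'v \<Rightarrow> 'v"
  assumes LA: "lie_algebra scale br"
begin

sublocale vector_space scale using LA unfolding lie_algebra_def by auto

lemma add_l: "br (x + y) z = br x z + br y z" using LA unfolding lie_algebra_def by auto
lemma add_r: "br x (y + z) = br x y + br x z" using LA unfolding lie_algebra_def by auto
lemma sc_l: "br (scale c x) y = scale c (br x y)" using LA unfolding lie_algebra_def by auto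
lemma sc_r: "br x (scale c y) = scale c (br x y)" using LA unfolding lie_algebra_def by auto
lemma alt: "br x x = 0" using LA unfolding lie_algebra_def by auto
lemma jac: "br x (br y z) + br y (br z x) + br z (br x y) = 0" using LA unfolding lie_algebra_def by auto

lemma zero_r[simp]: "br x 0 = 0"
  using add_r[of x 0 0] by simp
lemma zero_l[simp]: "br 0 x = 0"
  using add_l[of 0 0 x] by simp
lemma neg_r[simp]: "br x (- y) = - br x y"
  using add_r[of x y "- y"] by (simp add: eq_neg_iff_add_eq_0 add.commute)

lemma diff_r: "br x (y - z) = br x y - br x z"
  using add_r[of x y "- z"] by simp

lemma anti: "br x y = - br y x"
proof -
  have "br (x+y) (x+y) = br x x + br y x + (br x y + br y y)" by (simp only: add_l add_r)
  then have "br x y + br y x = 0" by (simp add: alt add.commute)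
  then show ?thesis by (simp add: eq_neg_iff_add_eq_0)
qed

lemma span_zero_r: assumes "\<forall>s\<in>S. br u s = 0" "v \<in> span S" shows "br u v = 0"
  using assms(2) proof (induction rule: span_induct_alt)
  case base then show ?case by simp
next
  case (step c x y) then show ?case using assms(1) by (simp add: add_r sc_r)
qed

lemma span_zero_l: assumes "\<forall>s\<in>S. br s v = 0" "u \<in> span S" shows "br u v = 0"
  using span_zero_r[of S v u] assms anti by (metis neg_equal_0_iff_equal)

lemma subspace_center: "subspace (center br)"
  unfolding subspace_def center_def by (auto simp: add_l sc_l)


lemma main:
  assumes fin: "fin_dim scale"
    and pure: "pure_lie scale br"
    and d1: "dim (lcs scale br 1) = 2"
    and dk: "\<forall>k\<ge>2. dim (lcs scale br k) = 1"
  shows "dim (center br) = 1"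
proof -
  obtain B0 where "finite B0" "span B0 = UNIV" using fin unfolding fin_dim_def by auto
  obtain B where "B \<subseteq> B0" "independent B" "B0 \<subseteq> span B" using maximal_independent_subset[of B0] by blast
  have "span B = UNIV" using \<open>B0 \<subseteq> span B\<close> \<open>span B0 = UNIV\<close>
    by (metis span_minimal subspace_span top.extremum_uniqueI)
  moreover have "finite B" using \<open>B \<subseteq> B0\<close> \<open>finite B0\<close> finite_subset by blast
  ultimately interpret fd: finite_dimensional_vector_space scale B
    using \<open>independent B\<close> by unfold_locales auto
  define D1 where "D1 = lcs scale br 1"
  define D2 where "D2 = lcs scale br 2"
  define D3 where "D3 = lcs scale br 3"
  have D1: "D1 = span {br a b | a b. True}"
    unfolding D1_def by (simp add: brk_set_def)
  have D2: "D2 = span {br a b | a b. b \<in> D1}"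
    unfolding D2_def D1_def by (simp add: brk_set_def numeral_2_eq_2)
  have D3: "D3 = span {br a b | a b. b \<in> D2}"
    unfolding D3_def D2_def by (simp add: brk_set_def numeral_3_eq_3 numeral_2_eq_2)
  have dimD1: "dim D1 = 2" using d1 D1_def by simp
  have dimD2: "dim D2 = 1" using dk D2_def by simp
  have dimD3: "dim D3 = 1" using dk D3_def by simp
  have brD1: "br x y \<in> D1" for x y unfolding D1 by (rule span_base) auto
  have D2D1: "D2 \<subseteq> D1" unfolding D2 by (rule span_minimal) (auto simp: D1 intro: span_base)
  have brD2: "v \<in> D1 \<Longrightarrow> br x v \<in> D2" for x v unfolding D2 by (rule span_base) auto
  have sD2: "subspace D2" unfolding D2 by simp
  obtain Bz where Bz: "finite Bz" "Bz \<subseteq> D2" "independent Bz" "span Bz = D2" "card Bz = dim D2"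
    by (rule fd.basis_subspace_exists[OF sD2])
  then obtain z where "Bz = {z}" using card_1_singletonE dimD2 by metis
  then have z0: "z \<noteq> 0" and D2z: "D2 = span {z}" using Bz by auto
  have zD1: "z \<in> D1" using D2D1 D2z span_base by blast
  have inD2: "v \<in> D1 \<Longrightarrow> \<exists>k. br x v = scale k z" for x v
    using brD2[of v x] D2z span_singleton by auto
  have "\<not> D3 \<subseteq> {0}" proof assume "D3 \<subseteq> {0}" then have "dim D3 = 0" using fd.dim_eq_0 by blast then show False using dimD3 by simp qed
  have "\<exists>a b. b \<in> D2 \<and> br a b \<noteq> 0"
  proof (rule ccontr)
    assume "\<not> (\<exists>a b. b \<in> D2 \<and> br a b \<noteq> 0)"
    then have "{br a b | a b. b \<in> D2} \<subseteq> {0}" by blast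
    then have "D3 \<subseteq> span {0}" unfolding D3 by (rule span_mono)
    then show False using \<open>\<not> D3 \<subseteq> {0}\<close> by simp
  qed
  then obtain a b where "b \<in> D2" "br a b \<noteq> 0" by blast
  then obtain k where "b = scale k z" using D2z span_singleton by auto
  then have "br a z \<noteq> 0" using \<open>br a b \<noteq> 0\<close> sc_r by auto
  obtain \<gamma> where gam: "br a z = scale \<gamma> z" using inD2[OF zD1] by blast
  have g0: "\<gamma> \<noteq> 0" using gam \<open>br a z \<noteq> 0\<close> by auto
  have F1: "br z (br x y) = 0" for x y
  proof -
    obtain p where p: "br y z = scale p z" using inD2[OF zD1] by blast
    obtain q where q: "br x z = scale q z" using inD2[OF zD1] by blast
    have "br x (br y z) + br y (br z x) + br z (br x y) = 0" by (rule jac)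
    moreover have "br x (br y z) = scale (p*q) z" using p q sc_r by simp
    moreover have "br y (br z x) = - scale (q*p) z" proof -
      have "br y (br z x) = br y (- scale q z)" using q anti[of z x] by simp
      also have "\<dots> = - br y (scale q z)" by (rule neg_r)
      also have "\<dots> = - scale (q*p) z" using p sc_r by simp
      finally show ?thesis .
    qed
    ultimately show ?thesis by (simp only: mult.commute[of p q] add.right_inverse add_0_left)
  qed
  have F1': "v \<in> D1 \<Longrightarrow> br z v = 0" for v
    using span_zero_r[of "{br a b | a b. True}" z v] F1 D1 by auto
  have "span {z} \<noteq> D1"
  proof
    assume "span {z} = D1"
    then have "dim D1 = 1" using z0 dim_span[of "{z}"] fd.dim_singleton[of z] by simp
    then show False using dimD1 by simp
  qed
  have sD1: "subspace D1" unfolding D1 by simp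
  have "span {z} \<subseteq> D1" using span_minimal[of "{z}" D1] zD1 sD1 by blast
  then obtain w where wD1: "w \<in> D1" and wz: "w \<notin> span {z}"
    using \<open>span {z} \<noteq> D1\<close> by blast
  have wnz: "w \<noteq> z" using wz span_base[of z "{z}"] by auto
  have indwz: "independent {w, z}"
    using independent_insertI[OF wz] z0 dependent_single[of z] by blast
  have D1wz: "D1 \<subseteq> span {w, z}"
  proof (rule fd.card_ge_dim_independent)
    show "{w, z} \<subseteq> D1" using wD1 zD1 by blast
    show "independent {w, z}" by (rule indwz)
    show "dim D1 \<le> card {w, z}" using dimD1 wnz by simp
  qed
  obtain \<beta> where bet: "br a w = scale \<beta> z" using inD2[OF wD1] by blast
  define c where "c = scale \<gamma> w - scale \<beta> z"
  have c0: "c \<noteq> 0"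
  proof
    assume "c = 0"
    then have "scale \<gamma> w = scale \<beta> z" unfolding c_def by simp
    then have "scale (inverse \<gamma>) (scale \<gamma> w) = scale (inverse \<gamma>) (scale \<beta> z)" by simp
    then have "w = scale (inverse \<gamma> * \<beta>) z" using g0 by simp
    then have "w \<in> span {z}" by (simp add: span_base span_scale)
    then show False using wz by simp
  qed
  have cD1: "c \<in> D1" unfolding c_def using wD1 zD1 sD1
    by (metis span_diff span_eq_iff span_scale)
  have ac: "br a c = 0" unfolding c_def by (simp add: diff_r sc_r gam bet mult.commute)
  have zc: "br z c = 0" by (rule F1'[OF cD1])
  have wc: "br w c = 0"
  proof -
    have "br w z = 0" using F1'[OF wD1] anti[of w z] by simp
    then show ?thesis unfolding c_def by (simp add: diff_r sc_r alt)
  qed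
  have Dc: "u \<in> D1 \<Longrightarrow> br u c = 0" for u
    using span_zero_l[of "{w, z}" c u] wc zc D1wz by blast
  have cen: "br c y = 0" for y
  proof -
    obtain s where s: "br y c = scale s z" using inD2[OF cD1] by blast
    have "br a (br y c) + br y (br c a) + br c (br a y) = 0" by (rule jac)
    moreover have "br c a = 0" using ac anti[of c a] by simp
    moreover have "br c (br a y) = 0" using Dc[OF brD1[of a y]] anti[of c "br a y"] by simp
    ultimately have "br a (br y c) = 0" by simp
    then have "scale (s * \<gamma>) z = 0" using s gam sc_r by simp
    then have "s = 0" using z0 g0 by simp
    then have "br y c = 0" using s by simp
    then show ?thesis using anti[of c y] by simp
  qed
  have cZ: "c \<in> center br" unfolding center_def using cen by blast
  have sZ: "subspace (center br)" by (rule subspace_center)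
  have ge1: "1 \<le> dim (center br)"
    using fd.independent_card_le_dim[of "{c}" "center br"] cZ c0 dependent_single[of c] by simp
  have ZD1: "center br \<subseteq> D1"
  proof
    fix u assume uZ: "u \<in> center br"
    show "u \<in> D1"
    proof (rule ccontr)
      assume uD: "u \<notin> D1"
      obtain Bd where Bd: "Bd \<subseteq> D1" "independent Bd" "D1 \<subseteq> span Bd"
        using maximal_independent_subset[of D1] by blast
      have "span Bd \<subseteq> D1" using span_minimal[OF Bd(1) sD1] .
      then have uBd: "u \<notin> span Bd" using uD by blast
      have iu: "independent (insert u Bd)" by (rule independent_insertI[OF uBd Bd(2)])
      define E where "E = extend_basis (insert u Bd)"
      have iE: "independent E" unfolding E_def by (rule independent_extend_basis[OF iu])
      have sE: "span E = UNIV" unfolding E_def by (rule span_extend_basis[OF iu])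
      have supE: "insert u Bd \<subseteq> E" unfolding E_def by (rule extend_basis_superset[OF iu])
      have uE: "u \<in> E" using supE by blast
      have uns: "u \<notin> span (E - {u})" using iE uE dependent_def by blast
      have BdE: "Bd \<subseteq> E - {u}" using supE uBd span_base by blast
      have u0: "u \<noteq> 0" using uD sD1 unfolding subspace_def by blast
      have ucen: "br u x = 0" for x using uZ unfolding center_def by blast
      define A where "A = span {u}"
      define Bs where "Bs = span (E - {u})"
      have Ael: "x \<in> A \<Longrightarrow> \<exists>k. x = scale k u" for x unfolding A_def span_singleton by blast
      have idA: "lie_ideal scale br A"
        unfolding lie_ideal_def
      proof (intro conjI allI impI)
        show "subspace A" unfolding A_def by simp
        fix x y assume "y \<in> A"
        then obtain k where "y = scale k u" using Ael by blast
        then have "br x y = 0" using sc_r ucen anti[of x u] by simp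
        then show "br x y \<in> A" unfolding A_def by (simp add: span_zero)
      qed
      have idB: "lie_ideal scale br Bs"
        unfolding lie_ideal_def
      proof (intro conjI allI impI)
        show "subspace Bs" unfolding Bs_def by simp
        fix x y
        have "br x y \<in> span Bd" using brD1 Bd(3) by blast
        then show "br x y \<in> Bs" unfolding Bs_def using span_mono[OF BdE] by blast
      qed
      have An0: "A \<noteq> {0}" unfolding A_def using u0 span_base[of u "{u}"] by blast
      have abel: "\<forall>x\<in>A. \<forall>y\<in>A. br x y = 0"
      proof (intro ballI)
        fix x y assume "x \<in> A" "y \<in> A"
        then obtain k where "x = scale k u" using Ael by blast
        then show "br x y = 0" using sc_l ucen by simp
      qed
      have inter: "A \<inter> Bs = {0}"
      proof
        show "{0} \<subseteq> A \<inter> Bs" unfolding A_def Bs_def by (simp add: span_zero)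
        show "A \<inter> Bs \<subseteq> {0}"
        proof
          fix x assume x: "x \<in> A \<inter> Bs"
          then obtain k where k: "x = scale k u" using Ael by blast
          show "x \<in> {0}"
          proof (cases "k = 0")
            case True then show ?thesis using k by simp
          next
            case False
            have "scale (inverse k) x \<in> Bs" using x unfolding Bs_def by (simp add: span_scale)
            moreover have "scale (inverse k) x = u" using k False by simp
            ultimately show ?thesis using uns unfolding Bs_def by simp
          qed
        qed
      qed
      have sums: "{x + y | x y. x \<in> A \<and> y \<in> Bs} = UNIV"
      proof (intro set_eqI iffI)
        fix v :: 'v
        have "insert u (E - {u}) = E" using uE by blast
        then have "v \<in> span (insert u (E - {u}))" using sE by simp
        then obtain k where k: "v - scale k u \<in> span (E - {u})" using span_breakdown_eq by blast
        have "scale k u \<in> A" unfolding A_def by (simp add: span_base span_scale)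
        moreover have "v = scale k u + (v - scale k u)" by simp
        ultimately show "v \<in> {x + y | x y. x \<in> A \<and> y \<in> Bs}" using k unfolding Bs_def by blast
      qed simp
      show False using pure idA idB An0 abel inter sums unfolding pure_lie_def by blast
    qed
  qed
  have le1: "dim (center br) \<le> 1"
  proof (rule ccontr)
    assume "\<not> dim (center br) \<le> 1"
    then have "dim D1 \<le> dim (center br)" using dimD1 by simp
    then have ZeqD1: "center br = D1" using fd.subspace_dim_equal[OF sZ sD1 ZD1] by simp
    have "{br a b | a b. b \<in> D1} \<subseteq> {0}"
    proof
      fix x assume "x \<in> {br a b | a b. b \<in> D1}"
      then obtain p q where "x = br p q" "q \<in> center br" using ZeqD1 by blast
      then show "x \<in> {0}" using anti[of p q] unfolding center_def by simp
    qed
    then have "D2 \<subseteq> span {0}" unfolding D2 by (rule span_mono)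
    then have "D2 \<subseteq> {0}" by simp
    then have "dim D2 = 0" using fd.dim_eq_0 by blast
    then show False using dimD2 by simp
  qed
  show ?thesis using ge1 le1 by simp
qed
end

theorem lemma3p3:
  fixes scale :: "complex \<Rightarrow> 'v::ab_group_add \<Rightarrow> 'v"
    and br :: "'v \<Rightarrow> 'v \<Rightarrow> 'v"
  assumes "lie_algebra scale br"
    and "fin_dim scale"
    and "pure_lie scale br"
    and "\<not> nilpotent_lie scale br"
    and "solvable_lie scale br"
    and "breadth scale br = 2"
    and "vector_space.dim scale (lcs scale br 1) = 2"
    and "\<forall>k\<ge>2. vector_space.dim scale (lcs scale br k) = 1"
  shows "vector_space.dim scale (center br) = 1"
proof -
  interpret lie_alg scale br by (rule lie_alg.intro) (rule assms(1))
  show ?thesis using main assms by blast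
qed

end
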